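(* For $1\le i\le n$ define the polynomial $$F(n,i)(p,q)=\sum_{\pi\in S_n,\ \pi_n=i}p^{\mathrm{inv}(\pi)}q^{\mathrm{maj}(\pi)} .$$ Then $F(1,1)=1$, and for $n\ge 2$: $$F(n,i)=p^{n-i}\sum_{j=1}^{i-1}F(n-1,j)+p^{n-i}q^{n-1}\sum_{j=i}^{n-1}F(n-1,j)\qquad(1\le i\le n),$$ and consequently $$F(n,i)=p\,F(n,i+1)+p^{n-i}(q^{n-1}-1)F(n-1,i)\quad (1\le i<n),\qquad F(n,n)=\sum_{j=1}^{n-1}F(n-1,j).$$ Moreover $\sum_{\pi\in S_n}p^{\mathrm{inv}(\pi)}q^{\mathrm{maj}(\pi)}=F(n+1,n+1)(p,q)$.
   Context: For a permutation $\pi=\pi_1\cdots\pi_n$ of $\{1,\dots,n\}$: $\mathrm{inv}(\pi)$ is the number of pairs $1\le i<j\le n$ with $\pi_i>\pi_j$, and $\mathrm{maj}(\pi)$ is the sum of all positions $i\in\{1,\dots,n-1\}$ with $\pi_i>\pi_{i+1}$. *)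

theory Defs
  imports "HOL-Combinatorics.Permutations"
begin

text \<open>Permutations of {1..n} are functions pi with pi permutes {1..n}; pi i is the entry at position i.\<close>

definition inv_count :: "nat \<Rightarrow> (nat \<Rightarrow> nat) \<Rightarrow> nat" where
  "inv_count n \<pi> = card {(i, j). 1 \<le> i \<and> i < j \<and> j \<le> n \<and> \<pi> i > \<pi> j}"

definition maj :: "nat \<Rightarrow> (nat \<Rightarrow> nat) \<Rightarrow> nat" where
  "maj n \<pi> = (\<Sum>i \<in> {i. 1 \<le> i \<and> i \<le> n - 1 \<and> \<pi> i > \<pi> (Suc i)}. i)"

definition F :: "nat \<Rightarrow> nat \<Rightarrow> 'a::comm_ring_1 \<Rightarrow> 'a \<Rightarrow> 'a" where
  "F n i p q = (\<Sum>\<pi> \<in> {\<pi>. \<pi> permutes {1..n} \<and> \<pi> n = i}. p ^ inv_count n \<pi> * q ^ maj n \<pi>)"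

end

theory Submission
  imports Defs
begin

definition extp :: "nat \<Rightarrow> nat \<Rightarrow> (nat\<Rightarrow>nat) \<Rightarrow> nat \<Rightarrow> nat" where
 "extp m i s k = (if k = Suc m then i else if 1 \<le> k \<and> k \<le> m then (if s k < i then s k else Suc (s k)) else k)"
definition stdp :: "nat \<Rightarrow> nat \<Rightarrow> (nat\<Rightarrow>nat) \<Rightarrow> nat \<Rightarrow> nat" where
 "stdp m i p k = (if 1 \<le> k \<and> k \<le> m then (if p k < i then p k else p k - 1) else k)"

lemma perm_facts:
  assumes "s permutes {1..m}"
  shows "\<And>k. k \<in> {1..m} \<Longrightarrow> s k \<in> {1..m}" "\<And>k. k \<notin> {1..m} \<Longrightarrow> s k = k"
    "\<And>a b. s a = s b \<Longrightarrow> a = b"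
  using assms permutes_in_image permutes_not_in permutes_inj by (metis injD)+

lemma extp_perm:
  assumes s: "s permutes {1..m}" and i: "1 \<le> i" "i \<le> Suc m"
  shows "extp m i s permutes {1..Suc m}"
proof -
  note f = perm_facts[OF s]
  have im: "extp m i s ` {1..Suc m} \<subseteq> {1..Suc m}"
  proof
    fix y assume "y \<in> extp m i s ` {1..Suc m}"
    then obtain k where k: "k \<in> {1..Suc m}" "y = extp m i s k" by auto
    show "y \<in> {1..Suc m}"
    proof (cases "k = Suc m")
      case True thus ?thesis using k i by (simp add: extp_def)
    next
      case False
      hence "k \<in> {1..m}" using k by auto
      hence "s k \<in> {1..m}" using f(1) by auto
      thus ?thesis using k False by (auto simp: extp_def)
    qed
  qed
  have inj: "inj_on (extp m i s) {1..Suc m}"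
  proof (rule inj_onI)
    fix a b assume a: "a \<in> {1..Suc m}" and b: "b \<in> {1..Suc m}" and e: "extp m i s a = extp m i s b"
    show "a = b"
    proof (cases "a = Suc m"; cases "b = Suc m")
      assume "a = Suc m" "b = Suc m" thus ?thesis by simp
    next
      assume "a = Suc m" "b \<noteq> Suc m"
      thus ?thesis using e b by (auto simp: extp_def split: if_splits)
    next
      assume "a \<noteq> Suc m" "b = Suc m"
      thus ?thesis using e a by (auto simp: extp_def split: if_splits)
    next
      assume "a \<noteq> Suc m" "b \<noteq> Suc m"
      hence "s a = s b" using e a b by (auto simp: extp_def split: if_splits)
      thus ?thesis using f(3) by blast
    qed
  qed
  have "bij_betw (extp m i s) {1..Suc m} {1..Suc m}"
    unfolding bij_betw_def using inj endo_inj_surj[OF _ im inj] by simp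
  moreover have "\<And>x. x \<notin> {1..Suc m} \<Longrightarrow> extp m i s x = x" by (auto simp: extp_def)
  ultimately show ?thesis by (rule bij_imp_permutes)
qed

lemma stdp_perm:
  assumes p: "p permutes {1..Suc m}" and pn: "p (Suc m) = i"
  shows "stdp m i p permutes {1..m}"
proof -
  note f = perm_facts[OF p]
  have ne: "\<And>k. k \<in> {1..m} \<Longrightarrow> p k \<noteq> i" using f(3) pn by fastforce
  have i: "i \<in> {1..Suc m}" using f(1) pn by auto
  have im: "stdp m i p ` {1..m} \<subseteq> {1..m}"
  proof
    fix y assume "y \<in> stdp m i p ` {1..m}"
    then obtain k where k: "k \<in> {1..m}" "y = stdp m i p k" by auto
    have "p k \<in> {1..Suc m}" using f(1) k by auto
    thus "y \<in> {1..m}" using k ne[OF k(1)] i by (auto simp: stdp_def)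
  qed
  have inj: "inj_on (stdp m i p) {1..m}"
  proof (rule inj_onI)
    fix a b assume a: "a \<in> {1..m}" and b: "b \<in> {1..m}" and e: "stdp m i p a = stdp m i p b"
    have "p a \<in> {1..Suc m}" "p b \<in> {1..Suc m}" using f(1) a b by auto
    hence "p a = p b" using e a b ne[OF a] ne[OF b] by (auto simp: stdp_def split: if_splits)
    thus "a = b" using f(3) by blast
  qed
  have "bij_betw (stdp m i p) {1..m} {1..m}"
    unfolding bij_betw_def using inj endo_inj_surj[OF _ im inj] by simp
  moreover have "\<And>x. x \<notin> {1..m} \<Longrightarrow> stdp m i p x = x" by (auto simp: stdp_def)
  ultimately show ?thesis by (rule bij_imp_permutes)
qed

lemma bij_ext:
  assumes i: "1 \<le> i" "i \<le> Suc m"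
  shows "bij_betw (extp m i) {s. s permutes {1..m}} {p. p permutes {1..Suc m} \<and> p (Suc m) = i}"
proof (rule bij_betw_byWitness[where f' = "stdp m i"])
  show "\<forall>s\<in>{s. s permutes {1..m}}. stdp m i (extp m i s) = s"
  proof
    fix s assume "s \<in> {s. s permutes {1..m}}"
    hence s: "s permutes {1..m}" by simp
    note f = perm_facts[OF s]
    show "stdp m i (extp m i s) = s"
    proof
      fix k show "stdp m i (extp m i s) k = s k"
        using f(2)[of k] by (auto simp: stdp_def extp_def)
    qed
  qed
  show "\<forall>p\<in>{p. p permutes {1..Suc m} \<and> p (Suc m) = i}. extp m i (stdp m i p) = p"
  proof
    fix p assume "p \<in> {p. p permutes {1..Suc m} \<and> p (Suc m) = i}"
    hence p: "p permutes {1..Suc m}" and pn: "p (Suc m) = i" by auto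
    note f = perm_facts[OF p]
    have ne: "\<And>k. k \<in> {1..m} \<Longrightarrow> p k \<noteq> i" using f(3) pn by fastforce
    show "extp m i (stdp m i p) = p"
    proof
      fix k show "extp m i (stdp m i p) k = p k"
      proof (cases "k \<in> {1..m}")
        case True
        have "p k \<in> {1..Suc m}" using f(1) True by auto
        thus ?thesis using True ne[OF True] by (auto simp: stdp_def extp_def)
      next
        case False
        thus ?thesis using f(2)[of k] pn by (auto simp: stdp_def extp_def)
      qed
    qed
  qed
  show "extp m i ` {s. s permutes {1..m}} \<subseteq> {p. p permutes {1..Suc m} \<and> p (Suc m) = i}"
    using extp_perm[OF _ i] by (auto simp: extp_def)
  show "stdp m i ` {p. p permutes {1..Suc m} \<and> p (Suc m) = i} \<subseteq> {s. s permutes {1..m}}"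
    using stdp_perm by auto
qed

lemma inv_ext:
  assumes s: "s permutes {1..m}" and i: "1 \<le> i" "i \<le> Suc m"
  shows "inv_count (Suc m) (extp m i s) = inv_count m s + (Suc m - i)"
proof -
  note f = perm_facts[OF s]
  let ?e = "extp m i s"
  let ?A = "{(a, b). 1 \<le> a \<and> a < b \<and> b \<le> m \<and> s a > s b}"
  let ?C = "{a \<in> {1..m}. i \<le> s a}"
  let ?B = "(\<lambda>a. (a, Suc m)) ` ?C"
  have split: "{(a, b). 1 \<le> a \<and> a < b \<and> b \<le> Suc m \<and> ?e a > ?e b} = ?A \<union> ?B"
  proof (rule set_eqI, clarify)
    fix a b
    show "((a, b) \<in> {(a, b). 1 \<le> a \<and> a < b \<and> b \<le> Suc m \<and> ?e a > ?e b}) = ((a, b) \<in> ?A \<union> ?B)"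
    proof (cases "b = Suc m")
      case True thus ?thesis by (auto simp: extp_def)
    next
      case False thus ?thesis by (auto simp: extp_def)
    qed
  qed
  have finA: "finite ?A"
    by (rule finite_subset[of _ "{1..m} \<times> {1..m}"]) auto
  have disj: "?A \<inter> ?B = {}" by auto
  have "card ?B = card ?C" by (rule card_image) (auto intro: inj_onI)
  also have "card ?C = card (s ` ?C)"
    by (rule card_image[symmetric]) (meson f(3) inj_onI)
  also have "s ` ?C = {i..m}"
  proof
    show "s ` ?C \<subseteq> {i..m}" using f(1) by auto
    show "{i..m} \<subseteq> s ` ?C"
    proof
      fix y assume y: "y \<in> {i..m}"
      hence "y \<in> s ` {1..m}" using permutes_image[OF s] i by auto
      then obtain a where "a \<in> {1..m}" "y = s a" by auto
      thus "y \<in> s ` ?C" using y by auto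
    qed
  qed
  finally have cB: "card ?B = Suc m - i" by simp
  have finB: "finite ?B" by simp
  show ?thesis unfolding inv_count_def split
    by (simp only: card_Un_disjoint[OF finA finB disj] cB)
qed

lemma maj_ext:
  assumes s: "s permutes {1..m}" and i: "1 \<le> i" "i \<le> Suc m" and m: "1 \<le> m"
  shows "maj (Suc m) (extp m i s) = maj m s + (if i \<le> s m then m else 0)"
proof -
  let ?e = "extp m i s"
  let ?A = "{k. 1 \<le> k \<and> k \<le> m - 1 \<and> s k > s (Suc k)}"
  have fin: "finite ?A" by (rule finite_subset[of _ "{1..m}"]) auto
  have nm: "m \<notin> ?A" using m by auto
  have "{k. 1 \<le> k \<and> k \<le> Suc m - 1 \<and> ?e k > ?e (Suc k)}
        = ?A \<union> (if i \<le> s m then {m} else {})"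
    using m by (auto simp: extp_def split: if_splits)
  thus ?thesis unfolding maj_def using fin nm by (auto simp: sum.insert)
qed

lemma F_group:
  fixes p q :: "'a::comm_ring_1"
  assumes "finite J"
  shows "(\<Sum>j\<in>J. F m j p q) = (\<Sum>s\<in>{s. s permutes {1..m}}.
            if s m \<in> J then p ^ inv_count m s * q ^ maj m s else 0)"
proof -
  have fin: "finite {s. s permutes {1..m}}" by (rule finite_permutations) simp
  have "\<And>j. F m j p q = (\<Sum>s\<in>{s. s permutes {1..m}}. if s m = j then p ^ inv_count m s * q ^ maj m s else 0)"
  proof -
    fix j
    have eq: "{s. s permutes {1..m} \<and> s m = j} = {s \<in> {s. s permutes {1..m}}. s m = j}" by auto
    show "?thesis j" unfolding F_def eq by (rule sum.inter_filter[OF fin])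
  qed
  hence "(\<Sum>j\<in>J. F m j p q) = (\<Sum>j\<in>J. \<Sum>s\<in>{s. s permutes {1..m}}. if s m = j then p ^ inv_count m s * q ^ maj m s else 0)"
    by simp
  also have "\<dots> = (\<Sum>s\<in>{s. s permutes {1..m}}. \<Sum>j\<in>J. if s m = j then p ^ inv_count m s * q ^ maj m s else 0)"
    by (rule sum.swap)
  also have "\<dots> = (\<Sum>s\<in>{s. s permutes {1..m}}. if s m \<in> J then p ^ inv_count m s * q ^ maj m s else 0)"
    using assms by (simp add: sum.delta')
  finally show ?thesis .
qed

lemma F_rec:
  fixes p q :: "'a::comm_ring_1"
  assumes m: "1 \<le> m" and i: "1 \<le> i" "i \<le> Suc m"
  shows "F (Suc m) i p q = p ^ (Suc m - i) * (\<Sum>j = 1..i - 1. F m j p q)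
                    + p ^ (Suc m - i) * q ^ m * (\<Sum>j = i..m. F m j p q)"
proof -
  let ?P = "{s. s permutes {1..m}}"
  let ?w = "\<lambda>s. p ^ inv_count m s * q ^ maj m s"
  let ?k = "Suc m - i"
  have "F (Suc m) i p q = (\<Sum>s\<in>?P. p ^ inv_count (Suc m) (extp m i s) * q ^ maj (Suc m) (extp m i s))"
    unfolding F_def by (rule sum.reindex_bij_betw[OF bij_ext[OF i], symmetric])
  also have "\<dots> = (\<Sum>s\<in>?P. (if s m < i then p ^ ?k * ?w s else 0) + (if i \<le> s m then p ^ ?k * q ^ m * ?w s else 0))"
  proof (rule sum.cong[OF refl])
    fix s assume "s \<in> ?P"
    hence s: "s permutes {1..m}" by simp
    show "p ^ inv_count (Suc m) (extp m i s) * q ^ maj (Suc m) (extp m i s) =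
       (if s m < i then p ^ ?k * ?w s else 0) + (if i \<le> s m then p ^ ?k * q ^ m * ?w s else 0)"
      unfolding inv_ext[OF s i] maj_ext[OF s i m] by (simp add: power_add algebra_simps)
  qed
  also have "\<dots> = p ^ ?k * (\<Sum>s\<in>?P. if s m \<in> {1..i-1} then ?w s else 0)
           + p ^ ?k * q ^ m * (\<Sum>s\<in>?P. if s m \<in> {i..m} then ?w s else 0)"
  proof -
    have "\<And>s. s \<in> ?P \<Longrightarrow> s m \<in> {1..m}" proof -
      fix s assume "s \<in> ?P"
      hence "s permutes {1..m}" by simp
      moreover have "m \<in> {1..m}" using m by simp
      ultimately show "s m \<in> {1..m}" by (rule permutes_in_image[THEN iffD2])
    qed
    hence "(\<Sum>s\<in>?P. (if s m < i then p ^ ?k * ?w s else 0) + (if i \<le> s m then p ^ ?k * q ^ m * ?w s else 0))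
       = (\<Sum>s\<in>?P. p ^ ?k * (if s m \<in> {1..i-1} then ?w s else 0) + p ^ ?k * q ^ m * (if s m \<in> {i..m} then ?w s else 0))"
      using i by (intro sum.cong) auto
    thus ?thesis by (simp add: sum.distrib sum_distrib_left)
  qed
  also have "\<dots> = p ^ ?k * (\<Sum>j = 1..i - 1. F m j p q) + p ^ ?k * q ^ m * (\<Sum>j = i..m. F m j p q)"
    by (simp only: F_group[of "{1..i-1}"] F_group[of "{i..m}"] finite_atLeastAtMost)
  finally show ?thesis .
qed

lemma F11: "F 1 1 p q = 1"
proof -
  have "{\<pi>. \<pi> permutes {1..1::nat} \<and> \<pi> 1 = 1} = {id}" by auto
  moreover have "inv_count 1 id = 0"
  proof -
    have "{(i, j). 1 \<le> i \<and> i < j \<and> j \<le> (1::nat) \<and> i > j} = {}" by auto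
    thus ?thesis unfolding inv_count_def id_apply by (simp only: card.empty)
  qed
  moreover have "maj 1 id = 0" unfolding maj_def by simp
  ultimately show ?thesis unfolding F_def by simp
qed

lemma P2:
  fixes p q :: "'a::comm_ring_1"
  assumes "2 \<le> n" "1 \<le> i" "i \<le> n"
  shows "F n i p q = p ^ (n - i) * (\<Sum>j = 1..i - 1. F (n - 1) j p q)
                    + p ^ (n - i) * q ^ (n - 1) * (\<Sum>j = i..n - 1. F (n - 1) j p q)"
proof -
  obtain m where n: "n = Suc m" "1 \<le> m" using assms by (cases n) auto
  show ?thesis using F_rec[of m i p q] n assms by simp
qed

lemma P4:
  fixes p q :: "'a::comm_ring_1"
  assumes "2 \<le> n"
  shows "F n n p q = (\<Sum>j = 1..n - 1. F (n - 1) j p q)"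
  using P2[OF assms, of n p q] assms by simp

lemma P3:
  fixes p q :: "'a::comm_ring_1"
  assumes n: "2 \<le> n" and i: "1 \<le> i" "i < n"
  shows "F n i p q = p * F n (i + 1) p q + p ^ (n - i) * (q ^ (n - 1) - 1) * F (n - 1) i p q"
proof -
  obtain k where k: "i = Suc k" using i by (cases i) auto
  have a: "(\<Sum>j = 1..i. F (n - 1) j p q) = (\<Sum>j = 1..i - 1. F (n - 1) j p q) + F (n - 1) i p q"
    using k by (simp add: sum.cl_ivl_Suc)
  have b: "(\<Sum>j = i..n - 1. F (n - 1) j p q) = F (n - 1) i p q + (\<Sum>j = i + 1..n - 1. F (n - 1) j p q)"
    using i by (simp add: sum.atLeast_Suc_atMost)
  have e: "p * p ^ (n - (i + 1)) = p ^ (n - i)"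
    using i by (metis Suc_diff_Suc Suc_eq_plus1 power_Suc)
  have "p * F n (i + 1) p q = (p * p ^ (n - (i + 1))) * (\<Sum>j = 1..i. F (n - 1) j p q)
                    + (p * p ^ (n - (i + 1))) * q ^ (n - 1) * (\<Sum>j = i + 1..n - 1. F (n - 1) j p q)"
    using P2[OF n, of "i+1" p q] i by (simp add: algebra_simps)
  hence "p * F n (i + 1) p q = p ^ (n - i) * (\<Sum>j = 1..i. F (n - 1) j p q)
                    + p ^ (n - i) * q ^ (n - 1) * (\<Sum>j = i + 1..n - 1. F (n - 1) j p q)"
    unfolding e .
  thus ?thesis using P2[OF n i(1), of p q] i a b by (simp add: algebra_simps)
qed

lemma P5:
  fixes p q :: "'a::comm_ring_1"
  shows "(\<Sum>\<pi> \<in> {\<pi>. \<pi> permutes {1..n}}. p ^ inv_count n \<pi> * q ^ maj n \<pi>) = F (n + 1) (n + 1) p q"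
proof (cases "n = 0")
  case True
  have "inv_count 0 id = 0"
  proof -
    have "{(i, j). 1 \<le> i \<and> i < j \<and> j \<le> (0::nat) \<and> i > j} = {}" by auto
    thus ?thesis unfolding inv_count_def id_apply by (simp only: card.empty)
  qed
  moreover have "maj 0 id = 0" unfolding maj_def by simp
  ultimately show ?thesis using True F11[of p q] by simp
next
  case False
  have "F (n + 1) (n + 1) p q = (\<Sum>j = 1..n. F n j p q)" using P4[of "n+1" p q] False by simp
  also have "\<dots> = (\<Sum>s\<in>{s. s permutes {1..n}}. if s n \<in> {1..n} then p ^ inv_count n s * q ^ maj n s else 0)"
    by (rule F_group) simp
  also have "\<dots> = (\<Sum>\<pi> \<in> {\<pi>. \<pi> permutes {1..n}}. p ^ inv_count n \<pi> * q ^ maj n \<pi>)"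
  proof (rule sum.cong[OF refl])
    fix s assume "s \<in> {s. s permutes {1..n}}"
    hence "s permutes {1..n}" by simp
    moreover have "n \<in> {1..n}" using False by simp
    ultimately have "s n \<in> {1..n}" by (rule permutes_in_image[THEN iffD2])
    thus "(if s n \<in> {1..n} then p ^ inv_count n s * q ^ maj n s else 0) = p ^ inv_count n s * q ^ maj n s" by simp
  qed
  finally show ?thesis by simp
qed

theorem mainTheorem5:
  fixes p q :: "'a::comm_ring_1"
  shows "F 1 1 p q = 1
    \<and> (\<forall>n i. 2 \<le> n \<and> 1 \<le> i \<and> i \<le> n \<longrightarrow>
          F n i p q = p ^ (n - i) * (\<Sum>j = 1..i - 1. F (n - 1) j p q)
                    + p ^ (n - i) * q ^ (n - 1) * (\<Sum>j = i..n - 1. F (n - 1) j p q))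
    \<and> (\<forall>n i. 2 \<le> n \<and> 1 \<le> i \<and> i < n \<longrightarrow>
          F n i p q = p * F n (i + 1) p q + p ^ (n - i) * (q ^ (n - 1) - 1) * F (n - 1) i p q)
    \<and> (\<forall>n. 2 \<le> n \<longrightarrow> F n n p q = (\<Sum>j = 1..n - 1. F (n - 1) j p q))
    \<and> (\<forall>n. (\<Sum>\<pi> \<in> {\<pi>. \<pi> permutes {1..n}}. p ^ inv_count n \<pi> * q ^ maj n \<pi>)
            = F (n + 1) (n + 1) p q)"
  using F11 P2 P3 P4 P5 by blast

end
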